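(* Let $M\ge1$. There exist two languages $L_1,L_2$ and an enumeration $x_{1:\infty}$ which, for each $K\in\{L_1,L_2\}$, is an $M$-bounded displacement enumeration with respect to $K$ and an enumeration of $K$ with $o(1)$-noise, such that any set-based generator that generates in the limit from the target $K$ (for either possible target $K\in\{L_1,L_2\}$) on this enumeration achieves set-based upper density at most $1/M$ (for some choice of the target).
   Context: The universe is $U=\mathbb{N}$ with its natural order; a language is an infinite subset of $U$ with canonical enumeration $\ell_1<\ell_2<\cdots$. For $A,B\subseteq\mathbb{N}$ with $B=\{b_1<b_2<\cdots\}$, $\mu_{\rm low}(A,B)=\liminf_n\frac1n|A\cap\{b_1,\dots,b_n\}|$. For $x\in U$, $\sigma(x,L)=j$ if $x=\ell_j$ and $0$ if $x\notin L$; $x_{1:\infty}$ is an $M$-bounded displacement enumeration with respect to $L$ if there is $n^\star$ with $\sigma(x_n,L)\le Mn$ for all $n\ge n^\star$. An enumeration of $L$ with $o(1)$-noise is a sequence of distinct elements listing every element of $L$ with $\frac1n|\{t\le n:x_t\notin L\}|\to0$. A set-based generator outputs, from $x_1,\dots,x_n$ and knowledge of $\{L_1,L_2\}$ (not $K$), a set $A_n\subseteq U\setminus\{x_1,\dots,x_n\}$; it generates in the limit from $K$ if $A_n\subseteq K$ for all large $n$; its set-based upper density is $\limsup_n\mu_{\rm low}(A_n,K)$. *)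

theory Defs
  imports Complex_Main "HOL-Library.Infinite_Set" "HOL-Library.Liminf_Limsup" "HOL-Library.Extended_Real"
begin

(* Universe U = nat. Enumerations x :: nat => nat are 1-indexed: x 1, x 2, ...; x 0 is ignored. *)

definition language :: "nat set \<Rightarrow> bool" where
  "language L \<longleftrightarrow> infinite L"

definition canon :: "nat set \<Rightarrow> nat \<Rightarrow> nat" where
  "canon L j = enumerate L (j - 1)"

definition sigma :: "nat \<Rightarrow> nat set \<Rightarrow> nat" where
  "sigma y L = (if y \<in> L then (THE j. j \<ge> 1 \<and> canon L j = y) else 0)"

definition mu_low :: "nat set \<Rightarrow> nat set \<Rightarrow> ereal" where
  "mu_low A B = liminf (\<lambda>n. ereal (real (card (A \<inter> canon B ` {1..n})) / real n))"

definition bounded_displacement :: "nat \<Rightarrow> (nat \<Rightarrow> nat) \<Rightarrow> nat set \<Rightarrow> bool" where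
  "bounded_displacement M x L \<longleftrightarrow> (\<exists>n0. \<forall>n\<ge>n0. n \<ge> 1 \<longrightarrow> sigma (x n) L \<le> M * n)"

definition noisy_enum :: "(nat \<Rightarrow> nat) \<Rightarrow> nat set \<Rightarrow> bool" where
  "noisy_enum x L \<longleftrightarrow> inj_on x {1..} \<and> L \<subseteq> x ` {1..} \<and>
     (\<lambda>n. real (card {t\<in>{1..n}. x t \<notin> L}) / real n) \<longlonglongrightarrow> 0"

definition prefix :: "(nat \<Rightarrow> nat) \<Rightarrow> nat \<Rightarrow> nat list" where
  "prefix x n = map x [1..<Suc n]"

definition set_generator :: "(nat list \<Rightarrow> nat set) \<Rightarrow> bool" where
  "set_generator G \<longleftrightarrow> (\<forall>xs. G xs \<inter> set xs = {})"

definition generates_in_limit :: "(nat list \<Rightarrow> nat set) \<Rightarrow> (nat \<Rightarrow> nat) \<Rightarrow> nat set \<Rightarrow> bool" where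
  "generates_in_limit G x K \<longleftrightarrow> (\<exists>n0. \<forall>n\<ge>n0. G (prefix x n) \<subseteq> K)"

definition upper_density :: "(nat list \<Rightarrow> nat set) \<Rightarrow> (nat \<Rightarrow> nat) \<Rightarrow> nat set \<Rightarrow> ereal" where
  "upper_density G x K = limsup (\<lambda>n. mu_low (G (prefix x n)) K)"

end

theory Submission
  imports Defs "HOL-Library.Discrete_Functions" "HOL-Real_Asymp.Real_Asymp"
begin

lemma enum_UNIV: "enumerate (UNIV::nat set) n = n"
proof (induction n)
  case 0
  then show ?case by (simp add: enumerate_0)
next
  case (Suc n)
  have "enumerate (UNIV::nat set) (Suc n) = (LEAST s. enumerate UNIV n < s)"
    using enumerate_Suc''[of "UNIV::nat set" n] by simp
  also have "\<dots> = Suc n" using Suc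
    by (intro Least_equality) auto
  finally show ?case .
qed

lemma canon_UNIV: "canon UNIV j = j - 1"
  by (simp add: canon_def enum_UNIV)

lemma sigma_le:
  assumes "infinite L" "y \<in> L"
  shows "sigma y L \<le> y + 1"
proof -
  obtain i where i: "enumerate L i = y" using enumerate_Ex assms by blast
  have "(THE j. j \<ge> 1 \<and> canon L j = y) = i + 1"
  proof (rule the_equality)
    show "1 \<le> i + 1 \<and> canon L (i + 1) = y" using i by (simp add: canon_def)
  next
    fix j assume j: "1 \<le> j \<and> canon L j = y"
    then have "enumerate L (j - 1) = enumerate L i" using i by (simp add: canon_def)
    then have "j - 1 \<le> i" "i \<le> j - 1"
      using enumerate_mono_le_iff[OF assms(1), of "j-1" i] enumerate_mono_le_iff[OF assms(1), of i "j-1"] by auto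
    then have "j - 1 = i" by simp
    then show "j = i + 1" using j by linarith
  qed
  moreover have "i \<le> y" using le_enumerate[OF assms(1), of i] i by simp
  ultimately show ?thesis using assms by (simp add: sigma_def)
qed

lemma mu_low_bound:
  assumes M: "M \<ge> 1" and A: "A \<subseteq> {y. M dvd y}"
  shows "mu_low A UNIV \<le> ereal (1 / real M)"
proof -
  define f where "f = (\<lambda>n. ereal (real (card (A \<inter> canon UNIV ` {1..n})) / real n))"
  have img: "canon UNIV ` {1..n} = {..<n}" for n
  proof -
    have "canon UNIV ` {1..n} = (\<lambda>j. j - 1) ` {1..n}" by (simp add: canon_UNIV)
    also have "\<dots> = {..<n}"
    proof
      show "(\<lambda>j. j - 1) ` {1..n} \<subseteq> {..<n}" by auto
      show "{..<n} \<subseteq> (\<lambda>j. j - 1) ` {1..n}"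
      proof
        fix y assume "y \<in> {..<n}"
        then have "Suc y \<in> {1..n}" "y = Suc y - 1" by auto
        then show "y \<in> (\<lambda>j. j - 1) ` {1..n}" by blast
      qed
    qed
    finally show ?thesis .
  qed
  have key: "f (M * (k+1)) \<le> ereal (1 / real M)" for k
  proof -
    have sub: "A \<inter> {..<M*(k+1)} \<subseteq> (\<lambda>i. M*i) ` {..<k+1}"
    proof
      fix y assume "y \<in> A \<inter> {..<M*(k+1)}"
      then obtain i where "y = M*i" "M*i < M*(k+1)" using A by auto
      then have "i < k+1" by (metis mult_less_cancel1)
      then show "y \<in> (\<lambda>i. M*i) ` {..<k+1}" using \<open>y = M*i\<close> by blast
    qed
    have "card (A \<inter> {..<M*(k+1)}) \<le> card ((\<lambda>i. M*i) ` {..<k+1})"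
      by (rule card_mono[OF _ sub]) auto
    also have "\<dots> \<le> k + 1" using card_image_le[of "{..<k+1}" "\<lambda>i. M*i"] by simp
    finally have c: "card (A \<inter> {..<M*(k+1)}) \<le> k+1" .
    have "real (card (A \<inter> {..<M*(k+1)})) / real (M*(k+1)) \<le> real (k+1) / real (M*(k+1))"
      using c M by (intro divide_right_mono) auto
    also have "\<dots> = 1 / real M"
    proof -
      have pos: "real M \<noteq> 0" "real (k+1) \<noteq> 0" using M by auto
      show ?thesis unfolding of_nat_mult using pos by (simp only: divide_simps) simp
    qed
    finally show ?thesis unfolding f_def img by simp
  qed
  have "mu_low A UNIV = liminf f" unfolding mu_low_def f_def by simp
  also have "\<dots> = (SUP n. INF m\<in>{n..}. f m)" by (simp add: liminf_SUP_INF)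
  also have "\<dots> \<le> ereal (1 / real M)"
  proof (rule SUP_least)
    fix n :: nat
    have "n \<le> 1 * (n+1)" by simp
    also have "\<dots> \<le> M * (n+1)" using M by (rule mult_le_mono1)
    finally have "M * (n+1) \<in> {n..}" by simp
    then show "(INF m\<in>{n..}. f m) \<le> ereal (1 / real M)"
      using key[of n] by (meson INF_lower2)
  qed
  finally show ?thesis .
qed

definition nm :: "nat \<Rightarrow> nat \<Rightarrow> nat" where
  "nm M j = M * (j div (M - 1)) + j mod (M - 1) + 1"

lemma divmod_aux: "(r::nat) < M \<Longrightarrow> (r + M*q) div M = q"
proof -
  assume h: "r < M"
  then have "M \<noteq> 0" by simp
  then have "(r + M*q) div M = q + r div M" by (simp add: div_mult_self2)
  then show ?thesis using h by simp
qed

lemma nm_divmod: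
  assumes "M \<ge> 2"
  shows "nm M j mod M = j mod (M - 1) + 1" "nm M j div M = j div (M - 1)"
proof -
  have lt: "j mod (M - 1) + 1 < M" using assms
  proof -
    have "j mod (M - 1) < M - 1" using assms by simp
    then show ?thesis by linarith
  qed
  have e: "nm M j = (j mod (M - 1) + 1) + M * (j div (M - 1))" unfolding nm_def by simp
  show "nm M j mod M = j mod (M - 1) + 1" unfolding e using lt by simp
  have "M \<noteq> 0" using assms by simp
  then show "nm M j div M = j div (M - 1)" unfolding e using lt by (rule_tac divmod_aux) simp
qed

lemma nm_not_dvd: "M \<ge> 2 \<Longrightarrow> \<not> M dvd nm M j"
  using nm_divmod(1)[of M j] by (simp add: dvd_eq_mod_eq_0)

lemma nm_inj: assumes "M \<ge> 2" "nm M a = nm M b" shows "a = b"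
proof -
  have "a mod (M-1) = b mod (M-1)" "a div (M-1) = b div (M-1)"
    using nm_divmod[OF assms(1), of a] nm_divmod[OF assms(1), of b] assms(2) by auto
  then show ?thesis by (metis div_mult_mod_eq)
qed

lemma nm_surj: assumes "M \<ge> 2" "\<not> M dvd y" shows "\<exists>j. nm M j = y"
proof -
  define j where "j = (y div M) * (M - 1) + (y mod M - 1)"
  have r: "y mod M \<ge> 1" using assms(2) by (simp add: dvd_eq_mod_eq_0)
  have r2: "y mod M - 1 < M - 1" using assms(1) r
  proof -
    have "y mod M < M" using assms(1) by simp
    then show ?thesis using r by linarith
  qed
  have "j div (M - 1) = y div M" "j mod (M - 1) = y mod M - 1"
    unfolding j_def using r2 by (simp_all add: add.commute)
  then have "nm M j = M * (y div M) + (y mod M - 1) + 1" unfolding nm_def by simp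
  also have "\<dots> = M * (y div M) + y mod M" using r by linarith
  also have "\<dots> = y" by simp
  finally show ?thesis by blast
qed

lemma nm_bound: assumes "M \<ge> 2" shows "nm M j + 1 \<le> M * (j + 1)"
proof -
  have a: "M * (j div (M - 1)) \<le> M * j" by (simp add: div_le_dividend)
  have b: "j mod (M - 1) + 1 < M" using assms
  proof -
    have "j mod (M - 1) < M - 1" using assms by simp
    then show ?thesis by linarith
  qed
  have "M * (j + 1) = M * j + M" by simp
  then show ?thesis using a b unfolding nm_def by linarith
qed

lemma nonsq_bounds:
  assumes "(floor_sqrt t)^2 \<noteq> t"
  shows "floor_sqrt t * floor_sqrt t < t" "t \<le> floor_sqrt t * floor_sqrt t + 2 * floor_sqrt t"
proof -
  have "(floor_sqrt t)^2 \<le> t" by simp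
  then show "floor_sqrt t * floor_sqrt t < t" using assms by (simp add: power2_eq_square)
  have "t < (Suc (floor_sqrt t))^2" by (rule Suc_floor_sqrt_power2_gt)
  then show "t \<le> floor_sqrt t * floor_sqrt t + 2 * floor_sqrt t" by (simp add: power2_eq_square)
qed

lemma nonsq_inj_aux:
  fixes t1 t2 s1 s2 :: nat
  assumes "s1 < s2" "t1 \<le> s1*s1 + 2*s1" "s2 * s2 < t2"
  shows "t1 + s2 < t2 + s1"
proof -
  have "(s1 + 1) * s2 \<le> s2 * s2" using assms(1) by (intro mult_right_mono) auto
  moreover have "s1 * (s1 + 1) \<le> s1 * s2" using assms(1) by (intro mult_left_mono) auto
  ultimately show ?thesis using assms(2,3) by (simp add: algebra_simps)
qed

lemma nonsq_inj:
  assumes "(floor_sqrt t1)^2 \<noteq> t1" "(floor_sqrt t2)^2 \<noteq> t2"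
    "t1 - floor_sqrt t1 - 1 = t2 - floor_sqrt t2 - 1"
  shows "t1 = t2"
proof -
  define s1 where "s1 = floor_sqrt t1"
  define s2 where "s2 = floor_sqrt t2"
  note b1 = nonsq_bounds[OF assms(1), folded s1_def]
  note b2 = nonsq_bounds[OF assms(2), folded s2_def]
  have g1: "s1 < t1" using b1(1) by (metis le_less_trans le_square)
  have g2: "s2 < t2" using b2(1) by (metis le_less_trans le_square)
  have eq: "t1 + s2 = t2 + s1" using assms(3) g1 g2 unfolding s1_def[symmetric] s2_def[symmetric] by linarith
  consider "s1 = s2" | "s1 < s2" | "s2 < s1" by linarith
  then show ?thesis
  proof cases
    case 1 then show ?thesis using eq by simp
  next
    case 2 then show ?thesis using nonsq_inj_aux[OF 2 b1(2) b2(1)] eq by simp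
  next
    case 3 then show ?thesis using nonsq_inj_aux[OF 3 b2(2) b1(1)] eq by simp
  qed
qed

lemma nonsq_surj: "\<exists>t. t \<ge> 1 \<and> (floor_sqrt t)^2 \<noteq> t \<and> t - floor_sqrt t - 1 = k"
proof -
  define s where "s = floor_sqrt k"
  have s1: "s * s \<le> k" unfolding s_def using floor_sqrt_power2_le[of k] by (simp add: power2_eq_square)
  have s2: "k < (s+1)*(s+1)" unfolding s_def using Suc_floor_sqrt_power2_gt[of k] by (simp add: power2_eq_square)
  obtain m where m1: "m * m \<le> k + m" and m2: "k + m < m * m + 2 * m"
  proof (cases "k < s*s + s")
    case True
    show ?thesis by (rule that[of s]) (use True s1 in auto)
  next
    case False
    show ?thesis by (rule that[of "s+1"]) (use False s2 in \<open>auto simp: algebra_simps\<close>)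
  qed
  define t where "t = k + m + 1"
  have "m^2 \<le> t" "t < (Suc m)^2" using m1 m2 unfolding t_def by (simp_all add: power2_eq_square)
  then have fs: "floor_sqrt t = m" by (rule floor_sqrt_unique)
  have "m^2 \<noteq> t" using m1 unfolding t_def by (simp add: power2_eq_square)
  then show ?thesis using fs by (intro exI[of _ t]) (auto simp: t_def)
qed


definition xs :: "nat \<Rightarrow> nat \<Rightarrow> nat" where
  "xs M t = (if M = 1 then t - 1 else if (floor_sqrt t)^2 = t then nm M (floor_sqrt t - 1)
            else M * (t - floor_sqrt t - 1))"

lemma xs_inj: assumes "M \<ge> 1" shows "inj_on (xs M) {1..}"
proof (rule inj_onI)
  fix t1 t2 assume t1: "t1 \<in> {1..}" and t2: "t2 \<in> {1..}" and e: "xs M t1 = xs M t2"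
  show "t1 = t2"
  proof (cases "M = 1")
    case True then show ?thesis using e t1 t2 by (simp add: xs_def)
  next
    case False
    then have M2: "M \<ge> 2" using assms by simp
    define s1 where "s1 = floor_sqrt t1"
    define s2 where "s2 = floor_sqrt t2"
    have p1: "s1 > 0" "s2 > 0" using t1 t2 by (simp_all add: s1_def s2_def)
    show ?thesis
    proof (cases "s1^2 = t1"; cases "s2^2 = t2")
      assume a: "s1^2 = t1" "s2^2 = t2"
      then have "nm M (s1 - 1) = nm M (s2 - 1)" using e False by (simp add: xs_def s1_def s2_def)
      then have "s1 - 1 = s2 - 1" using nm_inj[OF M2] by blast
      then have "s1 = s2" using p1 by simp
      then show ?thesis using a by simp
    next
      assume a: "s1^2 = t1" "s2^2 \<noteq> t2"
      then have "nm M (s1 - 1) = M * (t2 - s2 - 1)" using e False by (simp add: xs_def s1_def s2_def)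
      then show ?thesis using nm_not_dvd[OF M2, of "s1 - 1"] by simp
    next
      assume a: "s1^2 \<noteq> t1" "s2^2 = t2"
      then have "nm M (s2 - 1) = M * (t1 - s1 - 1)" using e False by (simp add: xs_def s1_def s2_def)
      then show ?thesis using nm_not_dvd[OF M2, of "s2 - 1"] by simp
    next
      assume a: "s1^2 \<noteq> t1" "s2^2 \<noteq> t2"
      then have "M * (t1 - s1 - 1) = M * (t2 - s2 - 1)" using e False by (simp add: xs_def s1_def s2_def)
      then have "t1 - s1 - 1 = t2 - s2 - 1" using assms by simp
      then show ?thesis using nonsq_inj a unfolding s1_def s2_def by blast
    qed
  qed
qed

lemma xs_surj: assumes "M \<ge> 1" shows "\<exists>t\<ge>1. xs M t = y"
proof (cases "M = 1")
  case True then show ?thesis by (intro exI[of _ "y+1"]) (simp add: xs_def)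
next
  case False
  then have M2: "M \<ge> 2" using assms by simp
  show ?thesis
  proof (cases "M dvd y")
    case True
    then obtain k where k: "y = M * k" by blast
    obtain t where "t \<ge> 1" "(floor_sqrt t)^2 \<noteq> t" "t - floor_sqrt t - 1 = k" using nonsq_surj by blast
    then show ?thesis using k False by (intro exI[of _ t]) (simp add: xs_def)
  next
    case nd: False
    obtain j where j: "nm M j = y" using nm_surj[OF M2 nd] by blast
    have "floor_sqrt ((j+1)^2) = j + 1" by simp
    then show ?thesis using j False by (intro exI[of _ "(j+1)^2"]) (simp add: xs_def)
  qed
qed

lemma xs_bound: assumes "M \<ge> 1" "t \<ge> 1" shows "xs M t + 1 \<le> M * t"
proof (cases "M = 1")
  case True then show ?thesis using assms by (simp add: xs_def)
next
  case False
  then have M2: "M \<ge> 2" using assms by simp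
  define s where "s = floor_sqrt t"
  have "s > 0" using assms(2) floor_sqrt_greater_zero_iff[of t] by (simp add: s_def)
  then have s0: "s \<ge> 1" by simp
  show ?thesis
  proof (cases "s^2 = t")
    case True
    have "xs M t = nm M (s - 1)" using True False by (simp add: xs_def s_def)
    moreover have "nm M (s - 1) + 1 \<le> M * s" using nm_bound[OF M2, of "s - 1"] s0 by simp
    moreover have "M * s \<le> M * t" using s_def floor_sqrt_le[of t] by simp
    ultimately show ?thesis by linarith
  next
    case nsq: False
    have "xs M t = M * (t - s - 1)" using nsq False by (simp add: xs_def s_def)
    moreover have "M * (t - s - 1) \<le> M * (t - 1)" by (intro mult_le_mono2) linarith
    moreover have "M * t = M * (t - 1) + M" using assms(2)
      by (metis add.commute le_add_diff_inverse mult.right_neutral distrib_left)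
    ultimately show ?thesis using assms(1) by linarith
  qed
qed

lemma xs_sq: assumes "\<not> M dvd xs M t" shows "(floor_sqrt t)^2 = t"
  using assms by (auto simp: xs_def split: if_splits)

lemma noise_L2:
  assumes "M \<ge> 1"
  shows "(\<lambda>n. real (card {t\<in>{1..n}. xs M t \<notin> {y. M dvd y}}) / real n) \<longlonglongrightarrow> 0"
proof (rule tendsto_sandwich[of "\<lambda>n. 0" _ _ "\<lambda>n. sqrt (real n) / real n"])
  show "\<forall>\<^sub>F n in sequentially. 0 \<le> real (card {t\<in>{1..n}. xs M t \<notin> {y. M dvd y}}) / real n"
    by simp
  show "(\<lambda>n. 0::real) \<longlonglongrightarrow> 0" by simp
  show "(\<lambda>n. sqrt (real n) / real n) \<longlonglongrightarrow> 0" by real_asymp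
  show "\<forall>\<^sub>F n in sequentially. real (card {t\<in>{1..n}. xs M t \<notin> {y. M dvd y}}) / real n \<le> sqrt (real n) / real n"
  proof (rule always_eventually, rule allI)
    fix n
    have sub: "{t\<in>{1..n}. xs M t \<notin> {y. M dvd y}} \<subseteq> (\<lambda>m. m^2) ` {1..floor_sqrt n}"
    proof
      fix t assume t: "t \<in> {t\<in>{1..n}. xs M t \<notin> {y. M dvd y}}"
      then have sq: "(floor_sqrt t)^2 = t" using xs_sq by auto
      have "floor_sqrt t \<le> floor_sqrt n" using t mono_floor_sqrt' by auto
      moreover have "floor_sqrt t > 0" using t floor_sqrt_greater_zero_iff[of t] by auto
      then have "floor_sqrt t \<ge> 1" by linarith
      ultimately show "t \<in> (\<lambda>m. m^2) ` {1..floor_sqrt n}" using sq by (auto intro!: image_eqI[of _ _ "floor_sqrt t"])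
    qed
    have "card {t\<in>{1..n}. xs M t \<notin> {y. M dvd y}} \<le> card ((\<lambda>m. m^2) ` {1..floor_sqrt n})"
      by (rule card_mono[OF _ sub]) auto
    also have "\<dots> \<le> floor_sqrt n" using card_image_le[of "{1..floor_sqrt n}" "\<lambda>m. m^2"] by simp
    finally have c: "real (card {t\<in>{1..n}. xs M t \<notin> {y. M dvd y}}) \<le> real (floor_sqrt n)" by simp
    have "real (floor_sqrt n) \<le> sqrt (real n)"
    proof (rule real_le_rsqrt)
      have "(floor_sqrt n)^2 \<le> n" by simp
      then show "(real (floor_sqrt n))^2 \<le> real n" by (metis of_nat_le_iff of_nat_power)
    qed
    with c show "real (card {t\<in>{1..n}. xs M t \<notin> {y. M dvd y}}) / real n \<le> sqrt (real n) / real n"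
      by (intro divide_right_mono) auto
  qed
qed


theorem theorem7p10:
  fixes M :: nat
  assumes "M \<ge> 1"
  shows "\<exists>L1 L2 (x :: nat \<Rightarrow> nat).
    language L1 \<and> language L2 \<and>
    (\<forall>K\<in>{L1, L2}. bounded_displacement M x K \<and> noisy_enum x K) \<and>
    (\<forall>G. set_generator G \<and> (\<forall>K\<in>{L1, L2}. generates_in_limit G x K) \<longrightarrow>
         (\<exists>K\<in>{L1, L2}. upper_density G x K \<le> ereal (1 / real M)))"
proof (intro exI conjI)
  define L2 where "L2 = {y::nat. M dvd y}"
  let ?x = "xs M"
  show "language (UNIV::nat set)" by (simp add: language_def)
  have "range (\<lambda>k::nat. M * k) \<subseteq> L2" by (auto simp: L2_def)
  moreover have "infinite (range (\<lambda>k::nat. M * k))"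
    using assms by (intro range_inj_infinite) (simp add: inj_on_def)
  ultimately show "language L2" unfolding language_def using infinite_super by blast
  then have infL2: "infinite L2" by (simp add: language_def)
  have bd: "bounded_displacement M ?x K" if "infinite K" for K
    unfolding bounded_displacement_def
  proof (intro exI[of _ 1] allI impI)
    fix n :: nat assume n: "n \<ge> 1"
    show "sigma (?x n) K \<le> M * n"
    proof (cases "?x n \<in> K")
      case True
      then show ?thesis using sigma_le[OF that True] xs_bound[OF assms n] by linarith
    qed (simp add: sigma_def)
  qed
  have cov: "K \<subseteq> ?x ` {1..}" for K
  proof
    fix y assume "y \<in> K"
    obtain t where "t \<ge> 1" "?x t = y" using xs_surj[OF assms] by blast
    then show "y \<in> ?x ` {1..}" by auto
  qed
  have n1: "noisy_enum ?x UNIV" unfolding noisy_enum_def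
    using xs_inj[OF assms] cov by simp
  have n2: "noisy_enum ?x L2" unfolding noisy_enum_def L2_def
    using xs_inj[OF assms] cov noise_L2[OF assms] by blast
  show "\<forall>K\<in>{UNIV, L2}. bounded_displacement M ?x K \<and> noisy_enum ?x K"
    using bd[OF infL2] bd[of UNIV] n1 n2 by simp
  show "\<forall>G. set_generator G \<and> (\<forall>K\<in>{UNIV, L2}. generates_in_limit G ?x K) \<longrightarrow>
         (\<exists>K\<in>{UNIV, L2}. upper_density G ?x K \<le> ereal (1 / real M))"
  proof (intro allI impI)
    fix G assume "set_generator G \<and> (\<forall>K\<in>{UNIV, L2}. generates_in_limit G ?x K)"
    then have "generates_in_limit G ?x L2" by simp
    then obtain n0 where n0: "\<forall>n\<ge>n0. G (prefix ?x n) \<subseteq> L2" unfolding generates_in_limit_def by blast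
    have "upper_density G ?x UNIV \<le> ereal (1 / real M)"
      unfolding upper_density_def
    proof (rule Limsup_bounded, rule eventually_sequentiallyI[of n0])
      fix n assume "n0 \<le> n"
      then have "G (prefix ?x n) \<subseteq> {y. M dvd y}" using n0 L2_def by blast
      then show "mu_low (G (prefix ?x n)) UNIV \<le> ereal (1 / real M)" by (rule mu_low_bound[OF assms])
    qed
    then show "\<exists>K\<in>{UNIV, L2}. upper_density G ?x K \<le> ereal (1 / real M)" by blast
  qed
qed

end
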